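(* For every cubic graph $G$, $\nu_3(G) \geq \frac{7}{6}\cdot |V(G)|$.
   Context: Graphs are finite, without loops, possibly with multiple edges; a graph is cubic if every vertex has degree $3$. For $k\geq 1$, $\nu_k(G)$ is the maximum number of edges of a $k$-edge-colorable subgraph of $G$. *)

theory Defs
  imports Complex_Main
begin

text \<open>Parallel edges are distinct elements of E with the same endpoints.\<close>
definition multigraph :: "'v set \<Rightarrow> 'e set \<Rightarrow> ('e \<Rightarrow> 'v set) \<Rightarrow> bool" where
  "multigraph V E ends \<longleftrightarrow> finite V \<and> finite E \<and>
     (\<forall>e\<in>E. ends e \<subseteq> V \<and> card (ends e) = 2)"

definition degree :: "'e set \<Rightarrow> ('e \<Rightarrow> 'v set) \<Rightarrow> 'v \<Rightarrow> nat" where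
  "degree E ends v = card {e\<in>E. v \<in> ends e}"

definition cubic :: "'v set \<Rightarrow> 'e set \<Rightarrow> ('e \<Rightarrow> 'v set) \<Rightarrow> bool" where
  "cubic V E ends \<longleftrightarrow> multigraph V E ends \<and> (\<forall>v\<in>V. degree E ends v = 3)"

definition proper_edge_coloring :: "nat \<Rightarrow> 'e set \<Rightarrow> ('e \<Rightarrow> 'v set) \<Rightarrow> ('e \<Rightarrow> nat) \<Rightarrow> bool" where
  "proper_edge_coloring k F ends c \<longleftrightarrow>
     (\<forall>e\<in>F. c e < k) \<and>
     (\<forall>e\<in>F. \<forall>f\<in>F. e \<noteq> f \<and> ends e \<inter> ends f \<noteq> {} \<longrightarrow> c e \<noteq> c f)"

definition k_edge_colorable :: "nat \<Rightarrow> 'e set \<Rightarrow> ('e \<Rightarrow> 'v set) \<Rightarrow> bool" where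
  "k_edge_colorable k F ends \<longleftrightarrow> (\<exists>c. proper_edge_coloring k F ends c)"

definition nu :: "nat \<Rightarrow> 'e set \<Rightarrow> ('e \<Rightarrow> 'v set) \<Rightarrow> nat" where
  "nu k E ends = Max {card F | F. F \<subseteq> E \<and> k_edge_colorable k F ends}"

end

theory Submission
  imports Defs
begin
locale cub =
  fixes V :: "'v set" and E :: "'e set" and ends :: "'e \<Rightarrow> 'v set"
  assumes cub: "cubic V E ends"
begin

lemma mg: "multigraph V E ends" using cub by (simp add: cubic_def)
lemma finV: "finite V" and finE: "finite E" using mg by (auto simp: multigraph_def)
lemma endsV: "e \<in> E \<Longrightarrow> ends e \<subseteq> V" and ends2: "e \<in> E \<Longrightarrow> card (ends e) = 2"
  using mg by (auto simp: multigraph_def)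
lemma deg3: "v \<in> V \<Longrightarrow> card {e\<in>E. v \<in> ends e} = 3"
  using cub by (simp add: cubic_def degree_def)

lemma ends_pair: assumes "e \<in> E" "x \<in> ends e" shows "\<exists>y. y \<noteq> x \<and> ends e = {x,y}"
proof -
  obtain p q where "ends e = {p,q}" "p \<noteq> q" using ends2[OF assms(1)] by (auto simp: card_2_iff)
  then show ?thesis using assms(2) by auto
qed

lemma ends_fin: "e \<in> E \<Longrightarrow> finite (ends e)" using ends2 card.infinite by fastforce

definition proper :: "'e set \<Rightarrow> ('e \<Rightarrow> nat) \<Rightarrow> bool" where
  "proper F c \<equiv> proper_edge_coloring 3 F ends c"
definition maxcol :: "'e set \<Rightarrow> ('e \<Rightarrow> nat) \<Rightarrow> bool" where
  "maxcol F c \<equiv> F \<subseteq> E \<and> proper F c \<and> (\<forall>F' c'. F' \<subseteq> E \<and> proper F' c' \<longrightarrow> card F' \<le> card F)"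
definition has :: "'e set \<Rightarrow> ('e \<Rightarrow> nat) \<Rightarrow> nat \<Rightarrow> 'v \<Rightarrow> bool" where
  "has F c col x \<equiv> \<exists>f\<in>F. c f = col \<and> x \<in> ends f"
definition adj :: "'e set \<Rightarrow> ('e \<Rightarrow> nat) \<Rightarrow> nat set \<Rightarrow> ('v \<times> 'v) set" where
  "adj F c A = {(x,y). \<exists>f\<in>F. c f \<in> A \<and> ends f = {x,y}}"
definition reach :: "'e set \<Rightarrow> ('e \<Rightarrow> nat) \<Rightarrow> nat set \<Rightarrow> 'v \<Rightarrow> 'v set" where
  "reach F c A x = {y. (x,y) \<in> (adj F c A)\<^sup>*}"
definition sw :: "nat \<Rightarrow> nat \<Rightarrow> nat \<Rightarrow> nat" where
  "sw a b k = (if k = a then b else if k = b then a else k)"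
definition swapc :: "nat \<Rightarrow> nat \<Rightarrow> 'v set \<Rightarrow> ('e \<Rightarrow> nat) \<Rightarrow> 'e \<Rightarrow> nat" where
  "swapc a b S c = (\<lambda>f. if c f \<in> {a,b} \<and> ends f \<subseteq> S then sw a b (c f) else c f)"

lemma proper_lt: "proper F c \<Longrightarrow> f \<in> F \<Longrightarrow> c f < 3"
  by (simp add: proper_def proper_edge_coloring_def)

lemma uniq: "proper F c \<Longrightarrow> f\<in>F \<Longrightarrow> g\<in>F \<Longrightarrow> c f = c g \<Longrightarrow> x \<in> ends f \<Longrightarrow> x \<in> ends g \<Longrightarrow> f = g"
  unfolding proper_def proper_edge_coloring_def by blast

lemma adj_sym: "sym (adj F c A)"
  unfolding adj_def sym_def by (auto simp: insert_commute)

lemma reach_self: "x \<in> reach F c A x" by (simp add: reach_def)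
lemma reach_step: "x \<in> reach F c A u \<Longrightarrow> (x,y) \<in> adj F c A \<Longrightarrow> y \<in> reach F c A u"
  unfolding reach_def by (auto intro: rtrancl_into_rtrancl)
lemma reach_sym: "y \<in> reach F c A u \<Longrightarrow> u \<in> reach F c A y"
  using sym_rtrancl[OF adj_sym[of F c A]] unfolding reach_def sym_def by blast
lemma reach_trans: "y \<in> reach F c A u \<Longrightarrow> z \<in> reach F c A y \<Longrightarrow> z \<in> reach F c A u"
  unfolding reach_def by auto

lemma adjI: "f \<in> F \<Longrightarrow> c f \<in> A \<Longrightarrow> ends f = {x,y} \<Longrightarrow> (x,y) \<in> adj F c A"
  by (auto simp: adj_def)

lemma closed_sub:
  assumes "F \<subseteq> E" "f \<in> F" "c f \<in> {a,b}" "z \<in> ends f" "z \<in> S"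
    and clos: "\<forall>x y. x \<in> S \<longrightarrow> (x,y) \<in> adj F c {a,b} \<longrightarrow> y \<in> S"
  shows "ends f \<subseteq> S"
proof -
  obtain y where "ends f = {z,y}" using ends_pair assms by blast
  then have "(z,y) \<in> adj F c {a,b}" using assms by (auto simp: adj_def)
  then show ?thesis using clos assms \<open>ends f = {z,y}\<close> by auto
qed

lemma swap_proper:
  assumes pr: "proper F c" and FE: "F \<subseteq> E" and ab: "a < 3" "b < 3"
    and clos: "\<forall>x y. x \<in> S \<longrightarrow> (x,y) \<in> adj F c {a,b} \<longrightarrow> y \<in> S"
  shows "proper F (swapc a b S c)"
  unfolding proper_def proper_edge_coloring_def
proof (intro conjI ballI impI)
  fix f assume "f \<in> F" then show "swapc a b S c f < 3"
    using proper_lt[OF pr] ab by (auto simp: swapc_def sw_def)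
next
  fix f g assume f: "f \<in> F" and g: "g \<in> F" and h: "f \<noteq> g \<and> ends f \<inter> ends g \<noteq> {}"
  then obtain z where z: "z \<in> ends f" "z \<in> ends g" by blast
  have ne: "c f \<noteq> c g" using uniq[OF pr f g] z h by blast
  have cf: "c f \<in> {a,b} \<Longrightarrow> ends f \<subseteq> S \<Longrightarrow> c g \<in> {a,b} \<Longrightarrow> ends g \<subseteq> S"
    using closed_sub[OF FE g _ z(2) _ clos] z by blast
  have cg: "c g \<in> {a,b} \<Longrightarrow> ends g \<subseteq> S \<Longrightarrow> c f \<in> {a,b} \<Longrightarrow> ends f \<subseteq> S"
    using closed_sub[OF FE f _ z(1) _ clos] z by blast
  show "swapc a b S c f \<noteq> swapc a b S c g"
    using ne cf cg unfolding swapc_def sw_def by auto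
qed

lemma has_swap_out:
  assumes FE: "F \<subseteq> E" and "x \<notin> S"
  shows "has F (swapc a b S c) col x = has F c col x"
proof -
  have "\<And>f. f \<in> F \<Longrightarrow> x \<in> ends f \<Longrightarrow> swapc a b S c f = c f"
    using assms by (auto simp: swapc_def)
  then show ?thesis unfolding has_def by metis
qed

lemma has_swap_in:
  assumes FE: "F \<subseteq> E" and xS: "x \<in> S" and ab: "a \<noteq> b"
    and clos: "\<forall>x y. x \<in> S \<longrightarrow> (x,y) \<in> adj F c {a,b} \<longrightarrow> y \<in> S"
  shows "has F (swapc a b S c) a x = has F c b x" "has F (swapc a b S c) b x = has F c a x"
proof -
  have key: "\<And>f. f \<in> F \<Longrightarrow> x \<in> ends f \<Longrightarrow> swapc a b S c f = (if c f \<in> {a,b} then sw a b (c f) else c f)"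
    using closed_sub[OF FE _ _ _ xS clos] by (auto simp: swapc_def)
  show "has F (swapc a b S c) a x = has F c b x"
  proof
    assume "has F (swapc a b S c) a x"
    then obtain f where f: "f \<in> F" "swapc a b S c f = a" "x \<in> ends f" unfolding has_def by blast
    then have "c f = b" using key[OF f(1,3)] ab by (auto simp: sw_def split: if_splits)
    then show "has F c b x" using f unfolding has_def by blast
  next
    assume "has F c b x"
    then obtain f where f: "f \<in> F" "c f = b" "x \<in> ends f" unfolding has_def by blast
    then have "swapc a b S c f = a" using key[OF f(1,3)] ab by (auto simp: sw_def)
    then show "has F (swapc a b S c) a x" using f unfolding has_def by blast
  qed
  show "has F (swapc a b S c) b x = has F c a x"
  proof
    assume "has F (swapc a b S c) b x"
    then obtain f where f: "f \<in> F" "swapc a b S c f = b" "x \<in> ends f" unfolding has_def by blast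
    then have "c f = a" using key[OF f(1,3)] ab by (auto simp: sw_def split: if_splits)
    then show "has F c a x" using f unfolding has_def by blast
  next
    assume "has F c a x"
    then obtain f where f: "f \<in> F" "c f = a" "x \<in> ends f" unfolding has_def by blast
    then have "swapc a b S c f = b" using key[OF f(1,3)] ab by (auto simp: sw_def)
    then show "has F (swapc a b S c) b x" using f unfolding has_def by blast
  qed
qed

lemma maxcol_D:
  assumes m: "maxcol F c" and e: "e \<in> E" "e \<notin> F" and col: "col < 3"
    and miss: "\<forall>x\<in>ends e. \<not> has F c col x"
  shows False
proof -
  have FE: "F \<subseteq> E" and pr: "proper F c" using m by (auto simp: maxcol_def)
  have finF: "finite F" using FE finE finite_subset by blast
  let ?c = "c(e := col)"
  have "proper (insert e F) ?c"
    unfolding proper_def proper_edge_coloring_def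
  proof (intro conjI ballI impI)
    fix f assume "f \<in> insert e F" then show "?c f < 3" using col proper_lt[OF pr] by auto
  next
    fix f g assume f: "f \<in> insert e F" and g: "g \<in> insert e F" and h: "f \<noteq> g \<and> ends f \<inter> ends g \<noteq> {}"
    show "?c f \<noteq> ?c g"
    proof (cases "f = e")
      case True
      then have "g \<in> F" "g \<noteq> e" using g h by auto
      then show ?thesis using True h miss unfolding has_def by auto
    next
      case False
      show ?thesis
      proof (cases "g = e")
        case True
        then have "f \<in> F" using f False by auto
        then show ?thesis using True False h miss unfolding has_def by auto
      next
        case False2: False
        then have "f \<in> F" "g \<in> F" using f g False by auto
        then show ?thesis using pr h False False2 unfolding proper_def proper_edge_coloring_def by auto
      qed
    qed
  qed
  moreover have "insert e F \<subseteq> E" using FE e by auto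
  moreover have "\<forall>F' c'. F' \<subseteq> E \<and> proper F' c' \<longrightarrow> card F' \<le> card F" using m by (simp add: maxcol_def)
  ultimately have "card (insert e F) \<le> card F" by blast
  then show False using finF e by simp
qed

lemma kempe:
  assumes m: "maxcol F c" and e: "e \<in> E" "e \<notin> F" and uv: "ends e = {u,v}"
    and ab: "a \<noteq> b" "a < 3" "b < 3" and nu: "\<not> has F c a u" and nv: "\<not> has F c b v"
  shows "v \<in> reach F c {a,b} u"
proof (rule ccontr)
  assume nr: "v \<notin> reach F c {a,b} u"
  have FE: "F \<subseteq> E" and pr: "proper F c" using m by (auto simp: maxcol_def)
  let ?S = "reach F c {a,b} u"
  have clos: "\<forall>x y. x \<in> ?S \<longrightarrow> (x,y) \<in> adj F c {a,b} \<longrightarrow> y \<in> ?S" using reach_step by blast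
  let ?c = "swapc a b ?S c"
  have "proper F ?c" using swap_proper[OF pr FE ab(2,3) clos] .
  then have m2: "maxcol F ?c" using m by (auto simp: maxcol_def)
  have "\<not> has F ?c b u" using has_swap_in(2)[OF FE reach_self ab(1) clos] nu by simp
  moreover have "\<not> has F ?c b v" using has_swap_out[OF FE nr] nv by simp
  ultimately show False using maxcol_D[OF m2 e ab(3)] uv by auto
qed

end


context cub begin

definition col :: "nat \<Rightarrow> nat \<Rightarrow> nat \<Rightarrow> nat" where
  "col a b i = (if odd i then b else a)"

definition altpath :: "'e set \<Rightarrow> ('e \<Rightarrow> nat) \<Rightarrow> nat \<Rightarrow> nat \<Rightarrow> 'v list \<Rightarrow> bool" where
  "altpath F c a b xs \<equiv> distinct xs \<and>
     (\<forall>i. 0 < i \<and> i < length xs \<longrightarrow> (\<exists>f\<in>F. c f = col a b i \<and> ends f = {xs!(i-1), xs!i}))"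

lemma col_Suc: "a \<noteq> b \<Longrightarrow> col a b (Suc i) \<noteq> col a b i"
  by (auto simp: col_def)
lemma col_ab: "k \<in> {a,b} \<Longrightarrow> k = col a b i \<or> k = col a b (Suc i)"
  by (auto simp: col_def)
lemma col_in: "col a b i \<in> {a,b}" by (auto simp: col_def)

lemma ap_edge: "altpath F c a b xs \<Longrightarrow> 0 < i \<Longrightarrow> i < length xs \<Longrightarrow>
   \<exists>f\<in>F. c f = col a b i \<and> ends f = {xs!(i-1), xs!i}"
  by (simp add: altpath_def)

lemma path_edge:
  assumes pr: "proper F c" and ap: "altpath F c a b xs" and ab: "a \<noteq> b"
    and nu: "\<not> has F c a (xs!0)" and g: "g \<in> F" "c g \<in> {a,b}"
    and j: "Suc j < length xs" and xg: "xs!j \<in> ends g"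
  shows "\<exists>k. (k = j \<or> k = Suc j) \<and> 0 < k \<and> k < length xs \<and> c g = col a b k \<and> ends g = {xs!(k-1), xs!k}"
proof (cases "c g = col a b (Suc j)")
  case True
  obtain p where p: "p \<in> F" "c p = col a b (Suc j)" "ends p = {xs!j, xs!Suc j}"
    using ap_edge[OF ap _ j] by auto
  have "g = p" using uniq[OF pr g(1) p(1)] True p xg by auto
  then show ?thesis using p j by (intro exI[of _ "Suc j"]) auto
next
  case False
  then have cg: "c g = col a b j" using col_ab[OF g(2), of j] by auto
  show ?thesis
  proof (cases j)
    case 0
    then have "c g = a" using cg by (simp add: col_def)
    then have "has F c a (xs!0)" using g xg 0 unfolding has_def by auto
    then show ?thesis using nu by simp
  next
    case (Suc j')
    obtain p where p: "p \<in> F" "c p = col a b j" "ends p = {xs!(j-1), xs!j}"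
      using ap_edge[OF ap, of j] Suc j by auto
    have "g = p" using uniq[OF pr g(1) p(1)] cg p xg by auto
    then show ?thesis using p j cg Suc by (intro exI[of _ j]) auto
  qed
qed

lemma interior_has:
  assumes ap: "altpath F c a b xs" and j: "0 < j" "Suc j < length xs"
  shows "has F c a (xs!j) \<and> has F c b (xs!j)"
proof -
  obtain p where p: "p \<in> F" "c p = col a b j" "ends p = {xs!(j-1), xs!j}"
    using ap_edge[OF ap j(1)] j by auto
  obtain q where q: "q \<in> F" "c q = col a b (Suc j)" "ends q = {xs!j, xs!Suc j}"
    using ap_edge[OF ap, of "Suc j"] j by auto
  have "has F c (col a b j) (xs!j)" "has F c (col a b (Suc j)) (xs!j)"
    using p q unfolding has_def by auto
  then show ?thesis by (cases "odd j") (auto simp: col_def)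
qed

lemma ap_set_V:
  assumes FE: "F \<subseteq> E" and ap: "altpath F c a b xs" and u: "xs!0 \<in> V"
  shows "set xs \<subseteq> V"
proof
  fix x assume "x \<in> set xs"
  then obtain i where i: "i < length xs" "x = xs!i" by (auto simp: in_set_conv_nth)
  show "x \<in> V"
  proof (cases i)
    case 0 then show ?thesis using u i by simp
  next
    case (Suc i')
    obtain p where "p \<in> F" "ends p = {xs!(i-1), xs!i}" using ap_edge[OF ap, of i] i Suc by auto
    then show ?thesis using endsV FE i by auto
  qed
qed

lemma path_exists:
  assumes pr: "proper F c" and FE: "F \<subseteq> E" and ab: "a \<noteq> b"
    and nu: "\<not> has F c a u" and hb: "has F c b u"
  shows "\<exists>xs. altpath F c a b xs \<and> xs!0 = u \<and> 2 \<le> length xs \<and> set xs = reach F c {a,b} u"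
proof -
  let ?P = "\<lambda>xs. altpath F c a b xs \<and> xs \<noteq> [] \<and> xs!0 = u"
  obtain f0 where f0: "f0 \<in> F" "c f0 = b" "u \<in> ends f0" using hb unfolding has_def by auto
  obtain y0 where y0: "y0 \<noteq> u" "ends f0 = {u,y0}" using ends_pair f0 FE by blast
  have uV: "u \<in> V" using endsV f0 FE by auto
  have P0: "?P [u,y0]" unfolding altpath_def using f0 y0
    by (auto simp: col_def less_Suc_eq insert_commute)
  have bnd: "\<forall>xs. ?P xs \<longrightarrow> length xs < Suc (card V)"
  proof (intro allI impI)
    fix xs assume h: "?P xs"
    then have "set xs \<subseteq> V" using ap_set_V[OF FE, of c a b xs] uV by auto
    then have "card (set xs) \<le> card V" using finV card_mono by blast
    moreover have "distinct xs" using h by (simp add: altpath_def)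
    ultimately show "length xs < Suc (card V)" using distinct_card by fastforce
  qed
  obtain xs where xs: "?P xs" and mx: "\<forall>ys. ?P ys \<longrightarrow> length ys \<le> length xs"
    using ex_has_greatest_nat[of ?P "[u,y0]" length, OF P0 bnd] by blast
  have ap: "altpath F c a b xs" and x0: "xs!0 = u" using xs by auto
  have dist: "distinct xs" using ap by (simp add: altpath_def)
  have len2: "2 \<le> length xs" using mx P0 by force
  define m where "m = length xs - 1"
  have m: "Suc m = length xs" "0 < m" using len2 m_def by auto
  have nu0: "\<not> has F c a (xs!0)" using nu x0 by simp
  have NX: "\<And>g. g \<in> F \<Longrightarrow> c g = col a b (Suc m) \<Longrightarrow> xs!m \<notin> ends g"
  proof
    fix g assume g: "g \<in> F" "c g = col a b (Suc m)" and xg: "xs!m \<in> ends g"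
    obtain y where y: "y \<noteq> xs!m" "ends g = {xs!m, y}" using ends_pair g FE xg by blast
    show False
    proof (cases "y \<in> set xs")
      case False
      have "?P (xs @ [y])"
        unfolding altpath_def
      proof (intro conjI allI impI)
        show "distinct (xs @ [y])" using dist False by simp
        show "xs @ [y] \<noteq> []" by simp
        show "(xs @ [y]) ! 0 = u" using x0 m by (auto simp: nth_append)
      next
        fix i assume i: "0 < i \<and> i < length (xs @ [y])"
        show "\<exists>f\<in>F. c f = col a b i \<and> ends f = {(xs @ [y]) ! (i - 1), (xs @ [y]) ! i}"
        proof (cases "i < length xs")
          case True
          then show ?thesis using ap_edge[OF ap, of i] i by (auto simp: nth_append)
        next
          case False
          then have "i = Suc m" using i m by auto
          then have "(xs@[y])!(i-1) = xs!m" "(xs@[y])!i = y" using m by (simp_all add: nth_append m_def)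
          then show ?thesis using g y \<open>i = Suc m\<close> by metis
        qed
      qed
      then show False using mx by force
    next
      case True
      then obtain j where j: "j < length xs" "y = xs!j" by (auto simp: in_set_conv_nth)
      have "j \<noteq> m" using y j by auto
      then have j2: "Suc j < length xs" using j m by auto
      have cg: "c g \<in> {a,b}" using g col_in by auto
      obtain k where k: "k = j \<or> k = Suc j" "0 < k" "k < length xs" "c g = col a b k"
          "ends g = {xs!(k-1), xs!k}"
        using path_edge[OF pr ap ab nu0 g(1) cg j2] y j by auto
      have e2: "{xs!m, xs!j} = {xs!(k-1), xs!k}" using k y j by auto
      have mj: "xs!m \<noteq> xs!j" using y j by auto
      show False
      proof (cases "k = j")
        case True
        then have "xs!m = xs!(k-1)" using e2 mj by (auto simp: doubleton_eq_iff)
        moreover have "m < length xs" "k - 1 < length xs" using m k by auto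
        ultimately have "m = k - 1" using dist nth_eq_iff_index_eq by blast
        then show False using True \<open>j \<noteq> m\<close> j2 m k by auto
      next
        case False
        then have kj: "k = Suc j" using k by auto
        then have "xs!m = xs!k" using e2 mj by (auto simp: doubleton_eq_iff)
        moreover have "m < length xs" using m by auto
        ultimately have "m = k" using dist nth_eq_iff_index_eq k by blast
        then show False using k g col_Suc[OF ab, of m] by auto
      qed
    qed
  qed
  have clos: "\<And>x y. x \<in> set xs \<Longrightarrow> (x,y) \<in> adj F c {a,b} \<Longrightarrow> y \<in> set xs"
  proof -
    fix x y assume x: "x \<in> set xs" and xy: "(x,y) \<in> adj F c {a,b}"
    obtain g where g: "g \<in> F" "c g \<in> {a,b}" "ends g = {x,y}" using xy by (auto simp: adj_def)
    obtain j where j: "j < length xs" "x = xs!j" using x by (auto simp: in_set_conv_nth)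
    show "y \<in> set xs"
    proof (cases "Suc j < length xs")
      case True
      then obtain k where "k < length xs" "ends g = {xs!(k-1), xs!k}"
        using path_edge[OF pr ap ab nu0 g(1,2) True] g j by auto
      then show ?thesis using g by (metis insert_iff nth_mem less_imp_diff_less doubleton_eq_iff)
    next
      case False
      then have jm: "j = m" using j m by auto
      have "c g \<noteq> col a b (Suc m)" using NX[OF g(1)] g j jm by auto
      then have cg: "c g = col a b m" using col_ab[OF g(2), of m] by auto
      obtain p where p: "p \<in> F" "c p = col a b m" "ends p = {xs!(m-1), xs!m}"
        using ap_edge[OF ap m(2)] m by auto
      have "g = p" using uniq[OF pr g(1) p(1)] cg p g j jm by auto
      then have "y \<in> {xs!(m-1), xs!m}" using g p by auto
      then show ?thesis using m by auto
    qed
  qed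
  have "reach F c {a,b} u \<subseteq> set xs"
  proof
    fix y assume "y \<in> reach F c {a,b} u"
    then have "(u,y) \<in> (adj F c {a,b})\<^sup>*" by (simp add: reach_def)
    then show "y \<in> set xs"
    proof (induction rule: rtrancl_induct)
      case base have "xs!0 \<in> set xs" using len2 by (intro nth_mem) auto
        then show ?case using x0 by simp
    next
      case (step y z) then show ?case using clos by blast
    qed
  qed
  moreover have "\<forall>i < length xs. xs!i \<in> reach F c {a,b} u"
  proof (intro allI impI)
    fix i assume "i < length xs"
    then show "xs!i \<in> reach F c {a,b} u"
    proof (induction i)
      case 0 then show ?case using x0 reach_self by simp
    next
      case (Suc i)
      obtain p where p: "p \<in> F" "c p = col a b (Suc i)" "ends p = {xs!i, xs!Suc i}"
        using ap_edge[OF ap, of "Suc i"] Suc.prems by auto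
      have "(xs!i, xs!Suc i) \<in> adj F c {a,b}" using p col_in[of a b "Suc i"] by (intro adjI) auto
      then show ?case using reach_step Suc by auto
    qed
  qed
  then have "set xs \<subseteq> reach F c {a,b} u" by (auto simp: in_set_conv_nth)
  ultimately show ?thesis using ap x0 len2 by blast
qed

end

context cub begin

lemma endpoint:
  assumes ap: "altpath F c a b xs" and z: "z \<in> set xs" "z \<noteq> xs!0"
    and nz: "\<not> (has F c a z \<and> has F c b z)"
  shows "z = xs!(length xs - 1)"
proof -
  obtain j where j: "j < length xs" "z = xs!j" using z by (auto simp: in_set_conv_nth)
  have "j \<noteq> 0" using j(2) z(2) by (cases j) auto
  moreover have "\<not> Suc j < length xs" using interior_has[OF ap, of j] j nz \<open>j \<noteq> 0\<close> by auto
  ultimately have "j = length xs - 1" using j by linarith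
  then show ?thesis using j by simp
qed

lemma colors_card:
  assumes pr: "proper F c" and fin: "finite G" and sub: "{f\<in>F. x \<in> ends f} \<subseteq> G"
  shows "card {k. k < 3 \<and> has F c k x} \<le> card G"
proof -
  have "{k. k < 3 \<and> has F c k x} \<subseteq> c ` {f\<in>F. x \<in> ends f}" unfolding has_def by auto
  then have "card {k. k < 3 \<and> has F c k x} \<le> card (c ` {f\<in>F. x \<in> ends f})"
    using fin sub by (meson card_mono finite_imageI finite_subset)
  also have "\<dots> \<le> card {f\<in>F. x \<in> ends f}" using card_image_le fin sub finite_subset by blast
  also have "\<dots> \<le> card G" using card_mono fin sub by blast
  finally show ?thesis .
qed

lemma card_le_colors: "A \<subseteq> {k. k < (3::nat) \<and> P k} \<Longrightarrow> card A \<le> card {k. k < 3 \<and> P k}"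
  by (rule card_mono) auto

lemma F1:
  assumes m: "maxcol F c" and e: "e1 \<in> E" "e2 \<in> E" "e1 \<notin> F" "e2 \<notin> F" "e1 \<noteq> e2"
    and x: "x \<in> ends e1" "x \<in> ends e2"
  shows False
proof -
  have FE: "F \<subseteq> E" and pr: "proper F c" using m by (auto simp: maxcol_def)
  obtain v where v: "v \<noteq> x" "ends e1 = {x,v}" using ends_pair e x by blast
  obtain w where w: "w \<noteq> x" "ends e2 = {x,w}" using ends_pair e x by blast
  have xV: "x \<in> V" "v \<in> V" "w \<in> V" using endsV e v w by auto
  let ?D = "\<lambda>y. {f\<in>E. y \<in> ends f}"
  have fin: "\<And>y. finite (?D y - {e1})" "\<And>y. finite (?D y - {e1,e2})" using finE by auto
  have cD1: "\<And>y. y \<in> ends e1 \<Longrightarrow> card (?D y - {e1}) = 2"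
  proof -
    fix y assume y: "y \<in> ends e1"
    then have "card (?D y) = 3" using deg3 endsV e by blast
    moreover have "e1 \<in> ?D y" using y e by auto
    ultimately show "card (?D y - {e1}) = 2" by (simp add: card_Diff_singleton)
  qed
  have cD2: "\<And>y. y \<in> ends e1 \<Longrightarrow> y \<in> ends e2 \<Longrightarrow> card (?D y - {e1,e2}) = 1"
  proof -
    fix y assume y: "y \<in> ends e1" "y \<in> ends e2"
    then have "card (?D y) = 3" using deg3 endsV e by blast
    moreover have "{e1,e2} \<subseteq> ?D y" using y e by auto
    ultimately show "card (?D y - {e1,e2}) = 1" using e by (simp add: card_Diff_subset)
  qed
  have s1: "\<And>y. {f\<in>F. y \<in> ends f} \<subseteq> ?D y - {e1}" using FE e by auto
  have s2: "\<And>y. {f\<in>F. y \<in> ends f} \<subseteq> ?D y - {e1,e2}" using FE e by auto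
  have Cx: "card {k. k < 3 \<and> has F c k x} \<le> 1"
    using colors_card[OF pr fin(2) s2[of x]] cD2[OF x] by simp
  have Cv: "card {k. k < 3 \<and> has F c k v} \<le> 2"
    using colors_card[OF pr fin(1) s1[of v]] cD1[of v] v by simp
  obtain c0 where c0: "c0 < 3" "\<not> has F c c0 v"
  proof -
    have "\<not> (\<forall>k<3. has F c k v)"
    proof
      assume "\<forall>k<3. has F c k v"
      then have "{0,1,2} \<subseteq> {k. k < 3 \<and> has F c k v}" by auto
      then have "card {0,1,2::nat} \<le> card {k. k < 3 \<and> has F c k v}" by (rule card_le_colors)
      then have "card {0,1,2::nat} \<le> 2" using Cv by linarith
      then show False by simp
    qed
    then show ?thesis using that by blast
  qed
  have hx0: "has F c c0 x" using maxcol_D[OF m e(1,3) c0(1)] c0 v by auto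
  define a :: nat where "a = (if c0 = 0 then 1 else 0)"
  define b :: nat where "b = (if c0 = 2 then 1 else 2)"
  have c012: "c0 = 0 \<or> c0 = 1 \<or> c0 = 2" using c0 by auto
  have abc: "a < 3" "b < 3" "a \<noteq> c0" "b \<noteq> c0" "a \<noteq> b" using c012 by (auto simp: a_def b_def)
  have nxa: "\<not> has F c a x"
  proof
    assume "has F c a x"
    then have "{c0,a} \<subseteq> {k. k < 3 \<and> has F c k x}" using hx0 abc c0 by auto
    then have "card {c0,a} \<le> card {k. k < 3 \<and> has F c k x}" by (rule card_le_colors)
    then have "card {c0,a} \<le> 1" using Cx by linarith
    then show False using abc by simp
  qed
  have nxb: "\<not> has F c b x"
  proof
    assume "has F c b x"
    then have "{c0,b} \<subseteq> {k. k < 3 \<and> has F c k x}" using hx0 abc c0 by auto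
    then have "card {c0,b} \<le> card {k. k < 3 \<and> has F c k x}" by (rule card_le_colors)
    then have "card {c0,b} \<le> 1" using Cx by linarith
    then show False using abc by simp
  qed
  have hva: "has F c a v" using maxcol_D[OF m e(1,3) abc(1)] nxa v by auto
  have hvb: "has F c b v" using maxcol_D[OF m e(1,3) abc(2)] nxb v by auto
  have hwa: "has F c a w" using maxcol_D[OF m e(2,4) abc(1)] nxa w by auto
  have hwb: "has F c b w" using maxcol_D[OF m e(2,4) abc(2)] nxb w by auto
  have nwc0: "\<not> has F c c0 w"
  proof
    assume "has F c c0 w"
    then have sub: "{a,b,c0} \<subseteq> {k. k < 3 \<and> has F c k w}" using hwa hwb abc c0 by auto
    have "{f\<in>F. w \<in> ends f} \<subseteq> ?D w - {e2}" using FE e by auto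
    moreover have "card (?D w - {e2}) = 2"
    proof -
      have "card (?D w) = 3" using deg3 xV by blast
      moreover have "e2 \<in> ?D w" using w e by auto
      ultimately show ?thesis by (simp add: card_Diff_singleton)
    qed
    ultimately have "card {k. k < 3 \<and> has F c k w} \<le> 2"
      using colors_card[OF pr, of "?D w - {e2}" w] finE by simp
    moreover have "card {a,b,c0} \<le> card {k. k < 3 \<and> has F c k w}" using sub by (rule card_le_colors)
    ultimately have "card {a,b,c0} \<le> 2" by linarith
    then show False using abc by simp
  qed
  have vw: "v \<noteq> w"
  proof
    assume "v = w"
    then have "{f\<in>F. v \<in> ends f} \<subseteq> ?D v - {e1,e2}" using FE v w e by auto
    then have c2: "card {k. k < 3 \<and> has F c k v} \<le> card (?D v - {e1,e2})" by (rule colors_card[OF pr fin(2)])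
    have "v \<in> ends e1" "v \<in> ends e2" using v w \<open>v = w\<close> by auto
    then have "card (?D v - {e1,e2}) = 1" by (rule cD2)
    then have "card {k. k < 3 \<and> has F c k v} \<le> 1" using c2 by linarith
    moreover have "{a,b} \<subseteq> {k. k < 3 \<and> has F c k v}" using hva hvb abc by auto
    moreover have "card {a,b} \<le> card {k. k < 3 \<and> has F c k v}" using calculation(2) by (rule card_le_colors)
    ultimately have "card {a,b} \<le> 1" by linarith
    then show False using abc by simp
  qed
  have ne1: "e1 \<in> E" "e1 \<notin> F" "ends e1 = {v,x}" using e v by auto
  have ne2: "e2 \<in> E" "e2 \<notin> F" "ends e2 = {w,x}" using e w by auto
  have r1: "x \<in> reach F c {c0,a} v" using kempe[OF m ne1 abc(3)[symmetric] c0(1) abc(1) c0(2) nxa] .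
  have r2: "x \<in> reach F c {c0,a} w" using kempe[OF m ne2 abc(3)[symmetric] c0(1) abc(1) nwc0 nxa] .
  obtain xs where xs: "altpath F c c0 a xs" "xs!0 = v" "set xs = reach F c {c0,a} v"
    using path_exists[OF pr FE abc(3)[symmetric] c0(2) hva] by blast
  have xl: "x = xs!(length xs - 1)" using endpoint[OF xs(1), of x] xs r1 v nxa by auto
  have "w \<in> reach F c {c0,a} v" using reach_trans[OF r1 reach_sym[OF r2]] .
  then have "w = xs!(length xs - 1)" using endpoint[OF xs(1), of w] xs vw nwc0 by auto
  then show False using w(1) xl by simp
qed

end

context cub begin

lemma in_take_conv: "y \<in> set (take i xs) \<longleftrightarrow> (\<exists>k<i. k < length xs \<and> y = xs!k)"
  by (auto simp: in_set_conv_nth)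

lemma shift_contra:
  assumes m: "maxcol F c" and e: "e \<in> E" "e \<notin> F" "ends e = {u,v}"
    and ab: "a \<noteq> b" "a < 3" "b < 3" and nu: "\<not> has F c a u" and nv: "\<not> has F c b v"
    and ap: "altpath F c a b xs" and x0: "xs!0 = u" and xl: "xs!(length xs - 1) = v"
    and i: "0 < i" "Suc i < length xs"
    and t: "t \<in> E" "t \<notin> F" "xs!i \<in> ends t"
  shows False
proof -
  have FE: "F \<subseteq> E" and pr: "proper F c" using m by (auto simp: maxcol_def)
  have finF: "finite F" using FE finE finite_subset by blast
  have dist: "distinct xs" using ap by (simp add: altpath_def)
  let ?n = "length xs"
  obtain p where p: "p \<in> F" "c p = col a b i" "ends p = {xs!(i-1), xs!i}"
    using ap_edge[OF ap i(1)] i by auto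
  define S where "S = set (take i xs)"
  define F' where "F' = insert e (F - {p})"
  define c' where "c' = (\<lambda>f. if f = e then b else if c f \<in> {a,b} \<and> ends f \<subseteq> S then sw a b (c f) else c f)"
  have nth_S: "\<And>k. k < ?n \<Longrightarrow> xs!k \<in> S \<longleftrightarrow> k < i"
  proof -
    fix k assume k: "k < ?n"
    show "xs!k \<in> S \<longleftrightarrow> k < i"
    proof
      assume "xs!k \<in> S"
      then obtain k' where "k' < i" "k' < ?n" "xs!k = xs!k'" unfolding S_def in_take_conv by blast
      then show "k < i" using dist k nth_eq_iff_index_eq[of xs k k'] by auto
    next
      assume "k < i" then show "xs!k \<in> S" unfolding S_def in_take_conv using k by blast
    qed
  qed
  have vS: "v \<notin> S" using nth_S[of "?n - 1"] xl i by auto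
  have uS: "u \<in> S" using nth_S[of 0] x0 i by (cases xs) auto
  have nu0: "\<not> has F c a (xs!0)" using nu x0 by simp
  have clos: "\<And>g z. g \<in> F \<Longrightarrow> g \<noteq> p \<Longrightarrow> c g \<in> {a,b} \<Longrightarrow> z \<in> ends g \<Longrightarrow> z \<in> S \<Longrightarrow> ends g \<subseteq> S"
  proof -
    fix g z assume g: "g \<in> F" "g \<noteq> p" "c g \<in> {a,b}" "z \<in> ends g" "z \<in> S"
    obtain j where j: "j < i" "j < ?n" "z = xs!j" using g(5) unfolding S_def in_take_conv by blast
    have sj: "Suc j < ?n" using j i by auto
    obtain k where k: "k = j \<or> k = Suc j" "0 < k" "k < ?n" "c g = col a b k" "ends g = {xs!(k-1), xs!k}"
      using path_edge[OF pr ap ab(1) nu0 g(1,3) sj] g(4) j by auto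
    show "ends g \<subseteq> S"
    proof (cases "k = i")
      case True
      then have "g = p" using uniq[OF pr g(1) p(1)] k p by auto
      then show ?thesis using g by simp
    next
      case False
      then have "k < i" using k j by auto
      then show ?thesis using k nth_S by auto
    qed
  qed
  have notb: "\<And>g z. g \<in> F \<Longrightarrow> g \<noteq> p \<Longrightarrow> z \<in> ends e \<Longrightarrow> z \<in> ends g \<Longrightarrow> c' g \<noteq> b"
  proof -
    fix g z assume g: "g \<in> F" "g \<noteq> p" "z \<in> ends e" "z \<in> ends g"
    have ge: "g \<noteq> e" using g e by auto
    show "c' g \<noteq> b"
    proof (cases "z = v")
      case True
      then have "\<not> ends g \<subseteq> S" using vS g by auto
      moreover have "c g \<noteq> b" using nv True g unfolding has_def by auto
      ultimately show ?thesis using ge by (simp add: c'_def)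
    next
      case False
      then have zu: "z = u" using g e by auto
      have "c g \<noteq> a" using nu zu g unfolding has_def by auto
      show ?thesis
      proof (cases "c g \<in> {a,b}")
        case True
        then have "ends g \<subseteq> S" using clos[OF g(1,2) True g(4)] zu uS by simp
        then show ?thesis using True ge \<open>c g \<noteq> a\<close> ab by (auto simp: c'_def sw_def)
      next
        case False
        then show ?thesis using ge by (auto simp: c'_def)
      qed
    qed
  qed
  have prop': "proper F' c'"
    unfolding proper_def proper_edge_coloring_def
  proof (intro conjI ballI impI)
    fix f assume "f \<in> F'"
    then show "c' f < 3" using proper_lt[OF pr] ab unfolding F'_def c'_def sw_def by auto
  next
    fix f g assume f: "f \<in> F'" and g: "g \<in> F'" and h: "f \<noteq> g \<and> ends f \<inter> ends g \<noteq> {}"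
    then obtain z where z: "z \<in> ends f" "z \<in> ends g" by blast
    show "c' f \<noteq> c' g"
    proof (cases "f = e")
      case True
      then have "g \<in> F" "g \<noteq> p" using g h unfolding F'_def by auto
      then show ?thesis using notb[of g z] True z by (simp add: c'_def)
    next
      case fe: False
      show ?thesis
      proof (cases "g = e")
        case True
        then have "f \<in> F" "f \<noteq> p" using f fe unfolding F'_def by auto
        then show ?thesis using notb[of f z] True z fe by (simp add: c'_def)
      next
        case ge: False
        then have fg: "f \<in> F" "f \<noteq> p" "g \<in> F" "g \<noteq> p" using f g fe unfolding F'_def by auto
        have ne: "c f \<noteq> c g" using uniq[OF pr fg(1) fg(3)] z h by blast
        have c1: "c f \<in> {a,b} \<Longrightarrow> ends f \<subseteq> S \<Longrightarrow> c g \<in> {a,b} \<Longrightarrow> ends g \<subseteq> S"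
          using clos[OF fg(3,4) _ z(2)] z(1) by blast
        have c2: "c g \<in> {a,b} \<Longrightarrow> ends g \<subseteq> S \<Longrightarrow> c f \<in> {a,b} \<Longrightarrow> ends f \<subseteq> S"
          using clos[OF fg(1,2) _ z(1)] z(2) by blast
        show ?thesis using ne c1 c2 fe ge unfolding c'_def sw_def by auto
      qed
    qed
  qed
  have F'E: "F' \<subseteq> E" using FE e unfolding F'_def by auto
  have "card F' = card F"
  proof -
    have "card F' = Suc (card (F - {p}))" unfolding F'_def using finF e by simp
    also have "\<dots> = card F" using p finF card_Diff1_less[of F p] by (simp add: card_Diff_singleton)
    finally show ?thesis .
  qed
  then have m': "maxcol F' c'" using m prop' F'E by (auto simp: maxcol_def)
  have pE: "p \<in> E" "p \<notin> F'" using p FE e unfolding F'_def by auto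
  have "xs!i \<noteq> xs!0" using nth_eq_iff_index_eq[of xs i 0] dist i by (cases xs) auto
  then have "xs!i \<noteq> u" using x0 by simp
  moreover have "xs!i \<noteq> v"
  proof
    assume "xs!i = v"
    then have "xs!i = xs!(?n - 1)" using xl by simp
    then have "i = ?n - 1" using dist i nth_eq_iff_index_eq[of xs i "?n - 1"] by auto
    then show False using i by auto
  qed
  ultimately have "t \<noteq> e" using t e by auto
  then have tF': "t \<notin> F'" using t unfolding F'_def by auto
  have "t \<noteq> p" using t p by auto
  then show False using F1[OF m' pE(1) t(1) pE(2) tF' _ _ t(3)] p by auto
qed

end

context cub begin

definition AA :: "'e set \<Rightarrow> ('e \<Rightarrow> nat) \<Rightarrow> 'e \<Rightarrow> nat set" where
  "AA F c e = {k. k < 3 \<and> (\<exists>x\<in>ends e. \<not> has F c k x)}"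
definition II :: "'e set \<Rightarrow> ('e \<Rightarrow> nat) \<Rightarrow> 'e \<Rightarrow> 'v set" where
  "II F c e = {y. \<exists>x\<in>ends e. y \<in> reach F c (AA F c e) x} - ends e"
definition V3 :: "'e set \<Rightarrow> 'v set" where
  "V3 F = V - \<Union> (ends ` (E - F))"

lemma onemiss:
  assumes m: "maxcol F c" and e: "e \<in> E" "e \<notin> F" and x: "x \<in> ends e"
  shows "\<exists>k<3. \<not> has F c k x \<and> (\<forall>k'<3. k' \<noteq> k \<longrightarrow> has F c k' x)"
proof -
  have FE: "F \<subseteq> E" and pr: "proper F c" using m by (auto simp: maxcol_def)
  let ?D = "{f\<in>E. x \<in> ends f}"
  let ?Fx = "{f\<in>F. x \<in> ends f}"
  have xV: "x \<in> V" using endsV e x by auto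
  have FxD: "?Fx = ?D - {e}"
  proof
    show "?Fx \<subseteq> ?D - {e}" using FE e by auto
    show "?D - {e} \<subseteq> ?Fx"
    proof
      fix f assume f: "f \<in> ?D - {e}"
      show "f \<in> ?Fx"
      proof (rule ccontr)
        assume "f \<notin> ?Fx"
        then have "f \<notin> F" using f by auto
        then show False using F1[OF m e(1) _ e(2) _ _ x, of f] f by auto
      qed
    qed
  qed
  have "card ?D = 3" using deg3 xV by blast
  then have cFx: "card ?Fx = 2" using FxD e x by (simp add: card_Diff_singleton)
  have finFx: "finite ?Fx" using finE FE by (auto intro: finite_subset)
  have inj: "inj_on c ?Fx" using uniq[OF pr] by (auto simp: inj_on_def)
  have img: "c ` ?Fx \<subseteq> {k. k < 3 \<and> has F c k x}" using proper_lt[OF pr] unfolding has_def by auto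
  have "card (c ` ?Fx) = 2" using card_image[OF inj] cFx by simp
  moreover have "card (c ` ?Fx) \<le> card {k. k < 3 \<and> has F c k x}" using img by (rule card_le_colors)
  ultimately have ge2: "2 \<le> card {k. k < 3 \<and> has F c k x}" by linarith
  have "finite (?D - {e})" using finE by auto
  then have "card {k. k < 3 \<and> has F c k x} \<le> card (?D - {e})"
    by (rule colors_card[OF pr _ FxD[THEN equalityD1]])
  then have le2: "card {k. k < 3 \<and> has F c k x} \<le> 2" using FxD cFx by simp
  obtain k where k: "k < 3" "\<not> has F c k x"
  proof -
    have "\<not> (\<forall>k<3. has F c k x)"
    proof
      assume "\<forall>k<3. has F c k x"
      then have "{0,1,2} \<subseteq> {k. k < 3 \<and> has F c k x}" by auto
      then have "card {0,1,2::nat} \<le> card {k. k < 3 \<and> has F c k x}" by (rule card_le_colors)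
      then show False using le2 by simp
    qed
    then show ?thesis using that by blast
  qed
  have "\<forall>k'<3. k' \<noteq> k \<longrightarrow> has F c k' x"
  proof (intro allI impI)
    fix k' assume k': "k' < 3" "k' \<noteq> k"
    show "has F c k' x"
    proof (rule ccontr)
      assume nk': "\<not> has F c k' x"
      have "{k. k < 3 \<and> has F c k x} \<subseteq> {0,1,2} - {k,k'}" using k nk' by auto
      then have "card {k. k < 3 \<and> has F c k x} \<le> card ({0,1,2::nat} - {k,k'})" by (intro card_mono) auto
      also have "\<dots> = 1"
      proof -
        have sub: "{k,k'} \<subseteq> {0,1,2::nat}" using k k' by auto
        have "card ({0,1,2::nat} - {k,k'}) = card {0,1,2::nat} - card {k,k'}"
          by (rule card_Diff_subset[OF _ sub]) simp
        then show ?thesis using k' by simp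
      qed
      finally show False using ge2 by simp
    qed
  qed
  then show ?thesis using k by blast
qed


lemma EF:
  assumes m: "maxcol F c" and e: "e \<in> E" "e \<notin> F"
  shows "\<exists>u v a b xs. ends e = {u,v} \<and> u \<noteq> v \<and> a \<noteq> b \<and> a < 3 \<and> b < 3 \<and>
     \<not> has F c a u \<and> \<not> has F c b v \<and> AA F c e = {a,b} \<and> altpath F c a b xs \<and>
     xs!0 = u \<and> xs!(length xs - 1) = v \<and> set xs = reach F c {a,b} u \<and>
     II F c e = set xs - {u,v} \<and> even (length xs - 1) \<and> 3 \<le> length xs \<and> II F c e \<subseteq> V3 F"
proof -
  have FE: "F \<subseteq> E" and pr: "proper F c" using m by (auto simp: maxcol_def)
  obtain u v where uv: "ends e = {u,v}" "u \<noteq> v" using ends2[OF e(1)] by (auto simp: card_2_iff)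
  obtain a where a: "a < 3" "\<not> has F c a u" "\<forall>k'<3. k' \<noteq> a \<longrightarrow> has F c k' u"
    using onemiss[OF m e, of u] uv by auto
  obtain b where b: "b < 3" "\<not> has F c b v" "\<forall>k'<3. k' \<noteq> b \<longrightarrow> has F c k' v"
    using onemiss[OF m e, of v] uv by auto
  have ab: "a \<noteq> b"
  proof
    assume "a = b"
    then show False using maxcol_D[OF m e a(1)] a b uv by auto
  qed
  have hbu: "has F c b u" using a b ab by auto
  have hav: "has F c a v" using a b ab by auto
  have AA: "AA F c e = {a,b}"
  proof
    show "AA F c e \<subseteq> {a,b}" using a b uv unfolding AA_def by auto
    show "{a,b} \<subseteq> AA F c e" using a b uv unfolding AA_def by auto
  qed
  obtain xs where xs: "altpath F c a b xs" "xs!0 = u" "2 \<le> length xs" "set xs = reach F c {a,b} u"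
    using path_exists[OF pr FE ab a(2) hbu] by blast
  have vr: "v \<in> reach F c {a,b} u" using kempe[OF m e uv(1) ab a(1) b(1) a(2) b(2)] .
  have xl: "xs!(length xs - 1) = v" using endpoint[OF xs(1), of v] vr xs uv b by auto
  have rv: "reach F c {a,b} v = reach F c {a,b} u"
    using reach_trans[OF reach_sym[OF vr]] reach_trans[OF vr] by blast
  have II: "II F c e = set xs - {u,v}" unfolding II_def AA using uv rv xs by auto
  have ev: "even (length xs - 1)"
  proof (rule ccontr)
    assume od: "odd (length xs - 1)"
    have "0 < length xs - 1" "length xs - 1 < length xs" using xs(3) by auto
    then obtain p where "p \<in> F" "c p = col a b (length xs - 1)" "ends p = {xs!(length xs - 1 - 1), xs!(length xs - 1)}"
      using ap_edge[OF xs(1)] by blast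
    then have "has F c b v" using od xl unfolding has_def col_def by auto
    then show False using b by simp
  qed
  have l3: "3 \<le> length xs" using ev xs(3) by (cases "length xs = 2") auto
  have V3: "II F c e \<subseteq> V3 F"
  proof
    fix y assume "y \<in> II F c e"
    then have y: "y \<in> set xs" "y \<noteq> u" "y \<noteq> v" using II by auto
    then obtain j where j: "j < length xs" "y = xs!j" by (auto simp: in_set_conv_nth)
    have "j \<noteq> 0" using j(2) y(2) xs(2) by (cases j) auto
    moreover have "j \<noteq> length xs - 1" using j y xl by auto
    ultimately have j2: "0 < j" "Suc j < length xs" using j by auto
    have "set xs \<subseteq> V" using ap_set_V[OF FE xs(1)] xs endsV e uv by auto
    then have "y \<in> V" using y by auto
    moreover have "y \<notin> \<Union> (ends ` (E - F))"
    proof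
      assume "y \<in> \<Union> (ends ` (E - F))"
      then obtain t where "t \<in> E" "t \<notin> F" "xs!j \<in> ends t" using j by auto
      then show False using shift_contra[OF m e uv(1) ab a(1) b(1) a(2) b(2) xs(1) xs(2) xl j2] by blast
    qed
    ultimately show "y \<in> V3 F" by (simp add: V3_def)
  qed
  show ?thesis
    apply (rule exI[of _ u], rule exI[of _ v], rule exI[of _ a], rule exI[of _ b], rule exI[of _ xs])
    apply (insert uv ab a(1,2) b(1,2) AA xs(1,2,4) xl II ev l3 V3)
    by (intro conjI; assumption)
qed

end

context cub begin

lemma pair3: "(a::nat) < 3 \<Longrightarrow> b < 3 \<Longrightarrow> a \<noteq> b \<Longrightarrow> {a,b} \<in> {{0,1},{0,2},{1,2}}"
proof -
  assume h: "a < 3" "b < 3" "a \<noteq> b"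
  then have "a = 0 \<or> a = 1 \<or> a = 2" "b = 0 \<or> b = 1 \<or> b = 2" by auto
  then show ?thesis using h(3) by (elim disjE) (simp_all add: insert_commute)
qed

lemma meet3: "(a::nat) < 3 \<Longrightarrow> b < 3 \<Longrightarrow> a' < 3 \<Longrightarrow> b' < 3 \<Longrightarrow> a \<noteq> b \<Longrightarrow> a' \<noteq> b' \<Longrightarrow>
   a \<notin> {a',b'} \<Longrightarrow> b \<notin> {a',b'} \<Longrightarrow> False"
  by simp

lemma EF_E:
  assumes "maxcol F c" "e \<in> E" "e \<notin> F"
  obtains u v a b xs where "ends e = {u,v}" "u \<noteq> v" "a \<noteq> b" "a < 3" "b < 3"
     "\<not> has F c a u" "\<not> has F c b v" "AA F c e = {a,b}" "altpath F c a b xs"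
     "xs!0 = u" "xs!(length xs - 1) = v" "set xs = reach F c {a,b} u"
     "II F c e = set xs - {u,v}" "even (length xs - 1)" "3 \<le> length xs" "II F c e \<subseteq> V3 F"
  apply (insert EF[OF assms])
  apply (elim exE conjE)
  apply (rule that)
  by assumption+

lemma C3:
  assumes m: "maxcol F c" and e: "e \<in> E" "e \<notin> F" and f: "f \<in> E" "f \<notin> F" and ef: "e \<noteq> f"
    and A: "AA F c e = AA F c f" and x: "x \<in> II F c e" "x \<in> II F c f"
  shows False
proof -
  obtain u v a b xs where E1: "ends e = {u,v}" "u \<noteq> v" "a \<noteq> b" "a < 3" "b < 3"
     "\<not> has F c a u" "\<not> has F c b v" "AA F c e = {a,b}" "altpath F c a b xs"
     "xs!0 = u" "xs!(length xs - 1) = v" "set xs = reach F c {a,b} u"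
     "II F c e = set xs - {u,v}" "even (length xs - 1)" "3 \<le> length xs" "II F c e \<subseteq> V3 F"
    by (rule EF_E[OF m e])
  obtain u' v' a' b' xs' where E2: "ends f = {u',v'}" "u' \<noteq> v'" "a' \<noteq> b'" "a' < 3" "b' < 3"
     "\<not> has F c a' u'" "\<not> has F c b' v'" "AA F c f = {a',b'}" "altpath F c a' b' xs'"
     "xs'!0 = u'" "xs'!(length xs' - 1) = v'" "set xs' = reach F c {a',b'} u'"
     "II F c f = set xs' - {u',v'}" "even (length xs' - 1)" "3 \<le> length xs'" "II F c f \<subseteq> V3 F"
    by (rule EF_E[OF m f])
  obtain y where y: "y \<in> ends f" "x \<in> reach F c (AA F c f) y" using x(2) unfolding II_def by blast
  have xr: "x \<in> reach F c {a,b} u" using x(1) E1(12,13) by auto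
  have "x \<in> reach F c {a,b} y" using y(2) A E1(8) by simp
  then have yr: "y \<in> reach F c {a,b} u" using reach_trans[OF xr reach_sym] by blast
  have ny: "\<not> (has F c a y \<and> has F c b y)"
  proof -
    have "y = u' \<or> y = v'" using y(1) E2(1) by auto
    then have "\<not> has F c a' y \<or> \<not> has F c b' y" using E2(6,7) by auto
    moreover have "{a',b'} = {a,b}" using A E1(8) E2(8) by simp
    ultimately show ?thesis by (auto simp: doubleton_eq_iff)
  qed
  show False
  proof (cases "y = u")
    case True
    then show False using F1[OF m e(1) f(1) e(2) f(2) ef, of y] E1(1) y(1) by auto
  next
    case False
    have "y \<in> set xs" using yr E1(12) by simp
    then have "y = v" using endpoint[OF E1(9), of y] E1(10,11) ny False by auto
    then show False using F1[OF m e(1) f(1) e(2) f(2) ef, of y] E1(1) y(1) by auto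
  qed
qed

lemma card_mid: "distinct xs \<Longrightarrow> u \<in> set xs \<Longrightarrow> v \<in> set xs \<Longrightarrow> u \<noteq> v \<Longrightarrow>
   card (set xs - {u,v}) = length xs - 2"
  by (simp add: card_Diff_subset distinct_card)

lemma II_ne:
  assumes m: "maxcol F c" and e: "e \<in> E" "e \<notin> F"
  shows "II F c e \<noteq> {}" "finite (II F c e)"
proof -
  obtain u v a b xs where E1: "ends e = {u,v}" "u \<noteq> v" "a \<noteq> b" "a < 3" "b < 3"
     "\<not> has F c a u" "\<not> has F c b v" "AA F c e = {a,b}" "altpath F c a b xs"
     "xs!0 = u" "xs!(length xs - 1) = v" "set xs = reach F c {a,b} u"
     "II F c e = set xs - {u,v}" "even (length xs - 1)" "3 \<le> length xs" "II F c e \<subseteq> V3 F"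
    by (rule EF_E[OF m e])
  have "xs!0 \<in> set xs" "xs!(length xs - 1) \<in> set xs" using E1(15) by (auto intro!: nth_mem)
  then have uvs: "u \<in> set xs" "v \<in> set xs" using E1(10,11) by auto
  have "distinct xs" using E1(9) by (simp add: altpath_def)
  then have "card (II F c e) = length xs - 2" using card_mid[OF _ uvs E1(2)] E1(13) by simp
  then have "0 < card (II F c e)" using E1(15) by simp
  then show "II F c e \<noteq> {}" "finite (II F c e)" by (auto simp: card_gt_0_iff)
qed

lemma excl:
  assumes m: "maxcol F c" and e: "e \<in> E" "e \<notin> F" and f: "f \<in> E" "f \<notin> F" and ef: "e \<noteq> f"
    and small: "card (II F c e) \<le> 2" and x: "x \<in> II F c e" "x \<in> II F c f"
  shows False
proof -
  obtain u v a b xs where E1: "ends e = {u,v}" "u \<noteq> v" "a \<noteq> b" "a < 3" "b < 3"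
     "\<not> has F c a u" "\<not> has F c b v" "AA F c e = {a,b}" "altpath F c a b xs"
     "xs!0 = u" "xs!(length xs - 1) = v" "set xs = reach F c {a,b} u"
     "II F c e = set xs - {u,v}" "even (length xs - 1)" "3 \<le> length xs" "II F c e \<subseteq> V3 F"
    by (rule EF_E[OF m e])
  obtain u' v' a' b' xs' where E2: "ends f = {u',v'}" "u' \<noteq> v'" "a' \<noteq> b'" "a' < 3" "b' < 3"
     "\<not> has F c a' u'" "\<not> has F c b' v'" "AA F c f = {a',b'}" "altpath F c a' b' xs'"
     "xs'!0 = u'" "xs'!(length xs' - 1) = v'" "set xs' = reach F c {a',b'} u'"
     "II F c f = set xs' - {u',v'}" "even (length xs' - 1)" "3 \<le> length xs'" "II F c f \<subseteq> V3 F"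
    by (rule EF_E[OF m f])
  have "xs!0 \<in> set xs" "xs!(length xs - 1) \<in> set xs" using E1(15) by (auto intro!: nth_mem)
  then have uvs: "u \<in> set xs" "v \<in> set xs" using E1(10,11) by auto
  have "distinct xs" using E1(9) by (simp add: altpath_def)
  then have "card (II F c e) = length xs - 2" using card_mid[OF _ uvs E1(2)] E1(13) by simp
  then have l3: "length xs = 3" using small E1(14,15) by presburger
  have dist: "distinct xs" using E1(9) by (simp add: altpath_def)
  have xuv: "x \<in> set xs" "x \<noteq> u" "x \<noteq> v" using x(1) E1(13) by auto
  have x1: "x = xs!1"
  proof -
    obtain j where j: "j < length xs" "x = xs!j" using xuv(1) by (auto simp: in_set_conv_nth)
    have "j \<noteq> 0" using j xuv E1(10) by (cases j) auto
    moreover have "j \<noteq> 2" using j xuv E1(11) l3 by auto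
    ultimately show ?thesis using j l3 by (cases j) (auto simp: less_Suc_eq numeral_3_eq_3)
  qed
  obtain p1 where p1: "p1 \<in> F" "c p1 = col a b 1" "ends p1 = {xs!0, xs!1}"
    using ap_edge[OF E1(9), of 1] l3 by auto
  obtain p2 where p2: "p2 \<in> F" "c p2 = col a b 2" "ends p2 = {xs!1, xs!2}"
    using ap_edge[OF E1(9), of 2] l3 by auto
  have x2: "xs!2 = v" using E1(11) l3 by simp
  have "AA F c e \<noteq> AA F c f" using C3[OF m e f ef _ x] by blast
  then have "a \<in> AA F c f \<or> b \<in> AA F c f"
    using E1(3,4,5,8) E2(3,4,5,8) meet3[of a b a' b'] by auto
  obtain y where y: "y \<in> ends f" "x \<in> reach F c (AA F c f) y" using x(2) unfolding II_def by blast
  have nV3: "\<And>z. z \<in> ends e \<Longrightarrow> z \<notin> V3 F" using e unfolding V3_def by auto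
  have notf: "\<And>z. z \<in> ends e \<Longrightarrow> z \<notin> ends f" using F1[OF m e(1) f(1) e(2) f(2) ef] by blast
  have "\<exists>z \<in> ends e. (x,z) \<in> adj F c (AA F c f)"
  proof (cases "a \<in> AA F c f")
    case True
    then have "(x, v) \<in> adj F c (AA F c f)" using p2 x1 x2 by (intro adjI[of p2]) (auto simp: col_def)
    then show ?thesis using E1(1) by auto
  next
    case False
    then have "b \<in> AA F c f" using \<open>a \<in> AA F c f \<or> b \<in> AA F c f\<close> by simp
    then have "(x, u) \<in> adj F c (AA F c f)" using p1 x1 E1(10) by (intro adjI[of p1]) (auto simp: col_def insert_commute)
    then show ?thesis using E1(1) by auto
  qed
  then obtain z where z: "z \<in> ends e" "(x,z) \<in> adj F c (AA F c f)" by blast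
  have "z \<in> reach F c (AA F c f) y" using reach_step[OF y(2) z(2)] .
  then have "z \<in> II F c f" using y(1) notf[OF z(1)] unfolding II_def by blast
  then show False using E2(16) nV3[OF z(1)] by blast
qed

end

context cub begin

lemma countU:
  assumes m: "maxcol F c"
  shows "card (E - F) \<le> card (V3 F)"
proof -
  have FE: "F \<subseteq> E" using m by (simp add: maxcol_def)
  define U where "U = E - F"
  define W where "W x = card {e\<in>U. x \<in> II F c e}" for x
  have finU: "finite U" using finE U_def by auto
  have finV3: "finite (V3 F)" using finV unfolding V3_def by auto
  have W3: "\<And>x. W x \<le> 3"
  proof -
    fix x
    let ?T = "{e\<in>U. x \<in> II F c e}"
    have inj: "inj_on (AA F c) ?T"
    proof (rule inj_onI)
      fix e f assume "e \<in> ?T" "f \<in> ?T" "AA F c e = AA F c f"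
      then show "e = f" using C3[OF m, of e f x] unfolding U_def by blast
    qed
    have img: "AA F c ` ?T \<subseteq> {{0,1},{0,2},{1,2}}"
    proof
      fix A assume "A \<in> AA F c ` ?T"
      then obtain e where e: "e \<in> E" "e \<notin> F" "A = AA F c e" unfolding U_def by auto
      obtain u v a b xs where E1: "ends e = {u,v}" "u \<noteq> v" "a \<noteq> b" "a < 3" "b < 3"
         "\<not> has F c a u" "\<not> has F c b v" "AA F c e = {a,b}" "altpath F c a b xs"
         "xs!0 = u" "xs!(length xs - 1) = v" "set xs = reach F c {a,b} u"
         "II F c e = set xs - {u,v}" "even (length xs - 1)" "3 \<le> length xs" "II F c e \<subseteq> V3 F"
        by (rule EF_E[OF m e(1,2)])
      show "A \<in> {{0,1},{0,2},{1,2}}" using pair3[OF E1(4,5,3)] E1(8) e(3) by simp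
    qed
    have "W x = card (AA F c ` ?T)" unfolding W_def using card_image[OF inj] by simp
    also have "\<dots> \<le> card {{0,1},{0,2},{1,2::nat}}" using img by (intro card_mono) auto
    also have "\<dots> = 3" by (simp add: doubleton_eq_iff)
    finally show "W x \<le> 3" .
  qed
  have W1: "\<And>e x. e \<in> U \<Longrightarrow> x \<in> II F c e \<Longrightarrow> 1 \<le> W x"
  proof -
    fix e x assume "e \<in> U" "x \<in> II F c e"
    then have "e \<in> {e\<in>U. x \<in> II F c e}" by simp
    moreover have "finite {e\<in>U. x \<in> II F c e}" using finU by simp
    ultimately show "1 \<le> W x" unfolding W_def by (metis One_nat_def Suc_leI card_gt_0_iff empty_iff)
  qed
  have per: "\<And>e. e \<in> U \<Longrightarrow> 1 \<le> (\<Sum>x\<in>II F c e. 1 / real (W x))"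
  proof -
    fix e assume eU: "e \<in> U"
    then have e: "e \<in> E" "e \<notin> F" unfolding U_def by auto
    have ne: "II F c e \<noteq> {}" "finite (II F c e)" using II_ne[OF m e] by auto
    show "1 \<le> (\<Sum>x\<in>II F c e. 1 / real (W x))"
    proof (cases "card (II F c e) \<le> 2")
      case True
      have "\<And>x. x \<in> II F c e \<Longrightarrow> W x = 1"
      proof -
        fix x assume x: "x \<in> II F c e"
        have "{f\<in>U. x \<in> II F c f} = {e}"
        proof
          show "{e} \<subseteq> {f\<in>U. x \<in> II F c f}" using eU x by auto
          show "{f\<in>U. x \<in> II F c f} \<subseteq> {e}"
          proof
            fix f assume f: "f \<in> {f\<in>U. x \<in> II F c f}"
            show "f \<in> {e}"
            proof (rule ccontr)
              assume "f \<notin> {e}"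
              then show False using excl[OF m e, of f x] f True x unfolding U_def by auto
            qed
          qed
        qed
        then show "W x = 1" unfolding W_def by simp
      qed
      then have "(\<Sum>x\<in>II F c e. 1 / real (W x)) = (\<Sum>x\<in>II F c e. 1)" by simp
      also have "\<dots> = real (card (II F c e))" by simp
      also have "\<dots> \<ge> 1" using ne by (simp add: Suc_leI card_gt_0_iff)
      finally show ?thesis .
    next
      case False
      have "\<And>x. x \<in> II F c e \<Longrightarrow> 1/3 \<le> 1 / real (W x)"
      proof -
        fix x assume "x \<in> II F c e"
        then have "1 \<le> W x" "W x \<le> 3" using W1 eU W3 by auto
        then show "1/3 \<le> 1 / real (W x)" by (simp add: frac_le)
      qed
      then have "real (card (II F c e)) * (1/3) \<le> (\<Sum>x\<in>II F c e. 1 / real (W x))"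
        by (rule sum_bounded_below)
      moreover have "3 \<le> real (card (II F c e))" using False by simp
      ultimately show ?thesis by linarith
    qed
  qed
  have swap: "(\<Sum>e\<in>U. \<Sum>x\<in>II F c e. 1 / real (W x)) = (\<Sum>x\<in>V3 F. real (W x) * (1 / real (W x)))"
  proof -
    have "\<And>e. e \<in> U \<Longrightarrow> (\<Sum>x\<in>II F c e. 1 / real (W x)) = (\<Sum>x\<in>V3 F. if x \<in> II F c e then 1 / real (W x) else 0)"
    proof -
      fix e assume "e \<in> U"
      then have "II F c e \<subseteq> V3 F" using EF[OF m] unfolding U_def by blast
      then have "V3 F \<inter> II F c e = II F c e" by blast
      then show "(\<Sum>x\<in>II F c e. 1 / real (W x)) = (\<Sum>x\<in>V3 F. if x \<in> II F c e then 1 / real (W x) else 0)"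
        using sum.inter_restrict[OF finV3, of "\<lambda>x. 1 / real (W x)" "II F c e"] by simp
    qed
    then have "(\<Sum>e\<in>U. \<Sum>x\<in>II F c e. 1 / real (W x)) = (\<Sum>e\<in>U. \<Sum>x\<in>V3 F. if x \<in> II F c e then 1 / real (W x) else 0)"
      by (rule sum.cong[OF refl])
    also have "\<dots> = (\<Sum>x\<in>V3 F. \<Sum>e\<in>U. if x \<in> II F c e then 1 / real (W x) else 0)"
      by (rule sum.swap)
    also have "\<dots> = (\<Sum>x\<in>V3 F. real (W x) * (1 / real (W x)))"
    proof (rule sum.cong[OF refl])
      fix x
      have "(\<Sum>e\<in>U. if x \<in> II F c e then 1 / real (W x) else 0) = (\<Sum>e\<in>{e\<in>U. x \<in> II F c e}. 1 / real (W x))"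
        using sum.inter_filter[OF finU, of "\<lambda>e. 1 / real (W x)" "\<lambda>e. x \<in> II F c e"] by simp
      also have "\<dots> = real (W x) * (1 / real (W x))" unfolding W_def by simp
      finally show "(\<Sum>e\<in>U. if x \<in> II F c e then 1 / real (W x) else 0) = real (W x) * (1 / real (W x))" .
    qed
    finally show ?thesis .
  qed
  have "real (card U) = (\<Sum>e\<in>U. 1)" by simp
  also have "\<dots> \<le> (\<Sum>e\<in>U. \<Sum>x\<in>II F c e. 1 / real (W x))" using per by (rule sum_mono)
  also have "\<dots> = (\<Sum>x\<in>V3 F. real (W x) * (1 / real (W x)))" by (rule swap)
  also have "\<dots> \<le> (\<Sum>x\<in>V3 F. 1)" by (rule sum_mono) simp
  also have "\<dots> = real (card (V3 F))" by simp
  finally show ?thesis unfolding U_def by simp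
qed

lemma handshake: "(\<Sum>x\<in>V. card {f\<in>E. x \<in> ends f}) = 2 * card E"
proof -
  have "(\<Sum>x\<in>V. card {f\<in>E. x \<in> ends f}) = (\<Sum>x\<in>V. \<Sum>f\<in>E. if x \<in> ends f then 1 else 0)"
  proof (rule sum.cong[OF refl])
    fix x
    show "card {f\<in>E. x \<in> ends f} = (\<Sum>f\<in>E. if x \<in> ends f then 1 else 0)"
      using sum.inter_filter[OF finE, of "\<lambda>_. 1::nat" "\<lambda>f. x \<in> ends f"] by simp
  qed
  also have "\<dots> = (\<Sum>f\<in>E. \<Sum>x\<in>V. if x \<in> ends f then 1 else 0)" by (rule sum.swap)
  also have "\<dots> = (\<Sum>f\<in>E. 2)"
  proof (rule sum.cong[OF refl])
    fix f assume f: "f \<in> E"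
    have "(\<Sum>x\<in>V. if x \<in> ends f then 1 else (0::nat)) = card {x\<in>V. x \<in> ends f}"
      using sum.inter_filter[OF finV, of "\<lambda>_. 1::nat" "\<lambda>x. x \<in> ends f"] by simp
    also have "{x\<in>V. x \<in> ends f} = ends f" using endsV[OF f] by auto
    finally show "(\<Sum>x\<in>V. if x \<in> ends f then 1 else (0::nat)) = 2" using ends2[OF f] by simp
  qed
  finally show ?thesis by simp
qed

lemma main:
  assumes m: "maxcol F c"
  shows "7 / 6 * real (card V) \<le> real (card F)"
proof -
  have FE: "F \<subseteq> E" using m by (simp add: maxcol_def)
  define U where "U = E - F"
  have finU: "finite U" using finE U_def by auto
  have "card (\<Union> (ends ` U)) = (\<Sum>e\<in>U. card (ends e))"
  proof (rule card_UN_disjoint[OF finU])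
    show "\<forall>e\<in>U. finite (ends e)" using ends_fin U_def by auto
    show "\<forall>e\<in>U. \<forall>f\<in>U. e \<noteq> f \<longrightarrow> ends e \<inter> ends f = {}"
      using F1[OF m] unfolding U_def by blast
  qed
  also have "\<dots> = (\<Sum>e\<in>U. 2)" using ends2 U_def by (intro sum.cong) auto
  finally have cV2: "card (\<Union> (ends ` U)) = 2 * card U" by simp
  have V2V: "\<Union> (ends ` U) \<subseteq> V" using endsV U_def by auto
  have "card (V3 F) = card V - card (\<Union> (ends ` U))"
    unfolding V3_def U_def[symmetric] using V2V finV by (intro card_Diff_subset) (auto intro: finite_subset)
  moreover have "card (\<Union> (ends ` U)) \<le> card V" using card_mono[OF finV V2V] .
  ultimately have cV: "card V = 2 * card U + card (V3 F)" using cV2 by linarith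
  have "(\<Sum>x\<in>V. card {f\<in>E. x \<in> ends f}) = (\<Sum>x\<in>V. 3)" using deg3 by (intro sum.cong) auto
  then have hs: "3 * card V = 2 * card E" using handshake by simp
  have "card U = card E - card F" unfolding U_def using FE finE by (intro card_Diff_subset) (auto intro: finite_subset)
  moreover have "card F \<le> card E" using card_mono[OF finE FE] .
  ultimately have cE: "card E = card F + card U" by linarith
  have "card U \<le> card (V3 F)" using countU[OF m] unfolding U_def .
  then have "7 * card V \<le> 6 * card F" using cV hs cE by linarith
  then have "7 * real (card V) \<le> 6 * real (card F)" by linarith
  then show ?thesis by simp
qed

end

theorem theorem3:
  fixes V :: "'v set" and E :: "'e set" and ends :: "'e \<Rightarrow> 'v set"
  assumes "cubic V E ends"
  shows "real (nu 3 E ends) \<ge> 7 / 6 * real (card V)"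
proof -
  interpret cub V E ends by (rule cub.intro) (rule assms)
  let ?S = "{card F | F. F \<subseteq> E \<and> k_edge_colorable 3 F ends}"
  have finS: "finite ?S"
  proof (rule finite_subset)
    show "?S \<subseteq> card ` Pow E" by auto
    show "finite (card ` Pow E)" using finE by simp
  qed
  have "k_edge_colorable 3 {} ends" by (auto simp: k_edge_colorable_def proper_edge_coloring_def)
  then have "card {} \<in> ?S" by (intro CollectI exI[of _ "{}"]) simp
  then have neS: "?S \<noteq> {}" by blast
  have "Max ?S \<in> ?S" using Max_in[OF finS neS] .
  then obtain F where F: "F \<subseteq> E" "k_edge_colorable 3 F ends" "card F = Max ?S" by auto
  obtain c where c: "proper_edge_coloring 3 F ends c" using F(2) unfolding k_edge_colorable_def by blast
  have "maxcol F c"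
    unfolding maxcol_def proper_def
  proof (intro conjI allI impI)
    show "F \<subseteq> E" by (rule F(1))
    show "proper_edge_coloring 3 F ends c" by (rule c)
    fix F' c' assume h: "F' \<subseteq> E \<and> proper_edge_coloring 3 F' ends c'"
    then have "card F' \<in> ?S" unfolding k_edge_colorable_def by blast
    then show "card F' \<le> card F" using Max_ge[OF finS] F(3) by simp
  qed
  then have "7 / 6 * real (card V) \<le> real (card F)" by (rule main)
  moreover have "nu 3 E ends = card F" unfolding nu_def using F(3) by simp
  ultimately show ?thesis by simp
qed



end
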